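(* There exist a proper $r\in[0,1]$ and a sequence $x\in\mathsf{MLR}_{\mu_r}$ such that $x$ is continuously proper but $r$ is not continuously proper.
   Context: For $p\in[0,1]$ the Bernoulli measure $\mu_p$ on $2^\omega$ is determined by $\mu_p(\llbracket\sigma\rrbracket)=p^{\#_0(\sigma)}(1-p)^{\#_1(\sigma)}$, where $\#_i(\sigma)$ is the number of occurrences of $i$ in $\sigma$. A real $p\in[0,1]$ is identified with its binary expansion in $2^\omega$, and measures on $[0,1]$ with measures on $2^\omega$. $\mathsf{MLR}_{\mu_p}$ is the set of sequences Martin-Löf random for $\mu_p$ relative to the oracle $p$. A sequence/real is proper if it is Martin-Löf random with respect to some computable measure, and continuously proper if it is Martin-Löf random with respect to some computable measure $\mu$ with $\mu(\{z\})=0$ for all $z$. *)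

theory Defs
  imports Complex_Main "HOL-Library.Nat_Bijection" "HOL-Library.Sublist"
begin

text \<open>Sequences in Cantor space are functions nat => bool (False = 0, True = 1);
finite strings are bool lists.  An oracle is a sequence nat => bool.\<close>

datatype recf = Zf | Sf | Proj nat | Comp recf "recf list" | Prec recf recf | Mn recf | Orc

inductive ev :: "(nat \<Rightarrow> bool) \<Rightarrow> recf \<Rightarrow> nat list \<Rightarrow> nat \<Rightarrow> bool"
  for X :: "nat \<Rightarrow> bool" where
  ev_Z: "ev X Zf xs 0"
| ev_S: "ev X Sf (x # xs) (Suc x)"
| ev_Proj: "i < length xs \<Longrightarrow> ev X (Proj i) xs (xs ! i)"
| ev_Comp: "list_all2 (\<lambda>g y. ev X g xs y) gs ys \<Longrightarrow> ev X f ys z \<Longrightarrow> ev X (Comp f gs) xs z"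
| ev_Prec0: "ev X f xs y \<Longrightarrow> ev X (Prec f g) (0 # xs) y"
| ev_PrecS: "ev X (Prec f g) (n # xs) y \<Longrightarrow> ev X g (y # n # xs) z \<Longrightarrow> ev X (Prec f g) (Suc n # xs) z"
| ev_Mn: "ev X f (n # xs) 0 \<Longrightarrow> (\<forall>m<n. \<exists>y. ev X f (m # xs) y \<and> y \<noteq> 0) \<Longrightarrow> ev X (Mn f) xs n"
| ev_Orc: "ev X Orc (n # xs) (if X n then 1 else 0)"

definition comp_fun :: "(nat \<Rightarrow> bool) \<Rightarrow> (nat \<Rightarrow> nat) \<Rightarrow> bool" where
  "comp_fun X f \<longleftrightarrow> (\<exists>P. \<forall>n. ev X P [n] (f n))"

definition ce :: "(nat \<Rightarrow> bool) \<Rightarrow> nat set \<Rightarrow> bool" where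
  "ce X W \<longleftrightarrow> (\<exists>P. W = {n. \<exists>y. ev X P [n] y})"

definition no_oracle :: "nat \<Rightarrow> bool" where
  "no_oracle = (\<lambda>_. False)"

definition str_code :: "bool list \<Rightarrow> nat" where
  "str_code \<sigma> = list_encode (map (\<lambda>b. if b then 1 else 0) \<sigma>)"

definition rat_dec :: "nat \<Rightarrow> real" where
  "rat_dec k = (case prod_decode k of (a, b) \<Rightarrow> of_int (int_decode a) / of_nat (Suc b))"

definition init :: "(nat \<Rightarrow> bool) \<Rightarrow> nat \<Rightarrow> bool list" where
  "init x n = map x [0..<n]"

text \<open>m \<sigma> is the measure of the cylinder [[\<sigma>]]; such an m determines a unique
Borel probability measure on 2^omega.\<close>
definition is_meas :: "(bool list \<Rightarrow> real) \<Rightarrow> bool" where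
  "is_meas m \<longleftrightarrow> m [] = 1 \<and> (\<forall>\<sigma>. 0 \<le> m \<sigma> \<and> m \<sigma> = m (\<sigma> @ [False]) + m (\<sigma> @ [True]))"

text \<open>Measure of the open set [[S]] generated by a set S of strings.\<close>
definition open_meas :: "(bool list \<Rightarrow> real) \<Rightarrow> bool list set \<Rightarrow> real" where
  "open_meas m S = (SUP L. \<Sum>\<tau>\<in>{\<tau>. length \<tau> = L \<and> (\<exists>\<sigma>\<in>S. prefix \<sigma> \<tau>)}. m \<tau>)"

text \<open>Computable measure: the cylinder values are uniformly computable reals.\<close>
definition comp_meas :: "(bool list \<Rightarrow> real) \<Rightarrow> bool" where
  "comp_meas m \<longleftrightarrow> (\<exists>f. comp_fun no_oracle f \<and>
     (\<forall>\<sigma> n. \<bar>rat_dec (f (prod_encode (str_code \<sigma>, n))) - m \<sigma>\<bar> \<le> (1/2) ^ n))"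

text \<open>mu({z}) = 0 for all z.\<close>
definition atomless :: "(bool list \<Rightarrow> real) \<Rightarrow> bool" where
  "atomless m \<longleftrightarrow> (\<forall>z. (\<lambda>n. m (init z n)) \<longlonglongrightarrow> 0)"

definition test_level :: "nat set \<Rightarrow> nat \<Rightarrow> bool list set" where
  "test_level W n = {\<sigma>. prod_encode (n, str_code \<sigma>) \<in> W}"

definition MLR :: "(bool list \<Rightarrow> real) \<Rightarrow> (nat \<Rightarrow> bool) \<Rightarrow> (nat \<Rightarrow> bool) \<Rightarrow> bool" where
  "MLR m X x \<longleftrightarrow> \<not> (\<exists>W. ce X W \<and> (\<forall>n. open_meas m (test_level W n) \<le> (1/2) ^ n)
                       \<and> (\<forall>n. \<exists>\<sigma>\<in>test_level W n. \<sigma> = init x (length \<sigma>)))"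

definition proper :: "(nat \<Rightarrow> bool) \<Rightarrow> bool" where
  "proper x \<longleftrightarrow> (\<exists>m. is_meas m \<and> comp_meas m \<and> MLR m no_oracle x)"

definition cont_proper :: "(nat \<Rightarrow> bool) \<Rightarrow> bool" where
  "cont_proper x \<longleftrightarrow> (\<exists>m. is_meas m \<and> comp_meas m \<and> atomless m \<and> MLR m no_oracle x)"

definition bern :: "real \<Rightarrow> bool list \<Rightarrow> real" where
  "bern p \<sigma> = p ^ length (filter Not \<sigma>) * (1 - p) ^ length (filter id \<sigma>)"

text \<open>Binary expansion of p in [0,1]: digit n (0-based) is the (n+1)-st binary digit
after the point; for dyadic p < 1 the terminating expansion is used, and 1 = 0.111...\<close>
definition binexp :: "real \<Rightarrow> nat \<Rightarrow> bool" where
  "binexp p = (if p = 1 then (\<lambda>_. True) else (\<lambda>n. odd (nat \<lfloor>p * 2 ^ Suc n\<rfloor>)))"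

end

theory Submission
  imports Defs "HOL-Library.Countable"
begin


instance recf :: countable by countable_datatype

lemma ev_det: "ev X P xs y \<Longrightarrow> ev X P xs y' \<Longrightarrow> y = y'"
proof (induction arbitrary: y' rule: ev.induct)
  case (ev_Z xs) from ev_Z.prems show ?case by (cases rule: ev.cases) auto
next
  case (ev_S x xs) from ev_S.prems show ?case by (cases rule: ev.cases) auto
next
  case (ev_Proj i xs) from ev_Proj.prems show ?case by (cases rule: ev.cases) auto
next
  case (ev_Comp xs gs ys f z)
  from ev_Comp.prems obtain ys' where a: "list_all2 (\<lambda>g y. ev X g xs y) gs ys'" and b: "ev X f ys' y'"
    by (cases rule: ev.cases) auto
  have "ys = ys'" using ev_Comp.IH(1) a
  proof (induction gs arbitrary: ys ys')
    case Nil then show ?case by simp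
  next
    case (Cons g gs)
    then obtain y1 ys1 y2 ys2 where "ys = y1 # ys1" "ys' = y2 # ys2" by (auto simp: list_all2_Cons1)
    with Cons show ?case by auto
  qed
  with b ev_Comp.IH(2) show ?case by simp
next
  case (ev_Prec0 f xs y g)
  from ev_Prec0.prems show ?case by (cases rule: ev.cases) (use ev_Prec0.IH in auto)
next
  case (ev_PrecS f g n xs y z)
  from ev_PrecS.prems show ?case by (cases rule: ev.cases) (use ev_PrecS.IH in auto)
next
  case (ev_Mn f n xs)
  from ev_Mn.prems obtain n' where e: "y' = n'" "ev X f (n' # xs) 0" "\<forall>m<n'. \<exists>y. ev X f (m # xs) y \<and> y \<noteq> 0"
    by (cases rule: ev.cases) auto
  show ?case
  proof (rule ccontr)
    assume "n \<noteq> y'"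
    then consider "n < n'" | "n' < n" using e(1) by linarith
    then show False
    proof cases
      case 1 then obtain y where "ev X f (n # xs) y" "y \<noteq> 0" using e by auto
      with ev_Mn.IH(1) show False by fastforce
    next
      case 2 then obtain y where "ev X f (n' # xs) y" "y \<noteq> 0" and "\<forall>y''. ev X f (n' # xs) y'' \<longrightarrow> y = y''"
        using ev_Mn.IH(2) by blast
      with e show False by auto
    qed
  qed
next
  case (ev_Orc n xs) from ev_Orc.prems show ?case by (cases rule: ev.cases) auto
qed

definition rf :: "(nat \<Rightarrow> bool) \<Rightarrow> nat \<Rightarrow> (nat list \<Rightarrow> nat) \<Rightarrow> bool" where
  "rf X k F \<longleftrightarrow> (\<exists>P. \<forall>xs. length xs = k \<longrightarrow> ev X P xs (F xs))"

lemma rf_cong: "rf X k F \<Longrightarrow> (\<And>xs. length xs = k \<Longrightarrow> F xs = G xs) \<Longrightarrow> rf X k G"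
  unfolding rf_def by metis

lemma rf_zero: "rf X k (\<lambda>_. 0)"
  unfolding rf_def by (auto intro: ev_Z)

lemma rf_proj: "i < k \<Longrightarrow> rf X k (\<lambda>xs. xs ! i)"
  unfolding rf_def by (auto intro: ev_Proj)

lemma rf_comp: "list_all (rf X k) Gs \<Longrightarrow> rf X (length Gs) F \<Longrightarrow> rf X k (\<lambda>xs. F (map (\<lambda>G. G xs) Gs))"
proof -
  assume a: "list_all (rf X k) Gs" and b: "rf X (length Gs) F"
  have "\<exists>Ps. list_all2 (\<lambda>P G. \<forall>xs. length xs = k \<longrightarrow> ev X P xs (G xs)) Ps Gs" using a
  proof (induction Gs)
    case Nil then show ?case by auto
  next
    case (Cons G Gs)
    then obtain Ps where "list_all2 (\<lambda>P G. \<forall>xs. length xs = k \<longrightarrow> ev X P xs (G xs)) Ps Gs" by auto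
    moreover from Cons.prems obtain P where "\<forall>xs. length xs = k \<longrightarrow> ev X P xs (G xs)" by (auto simp: rf_def)
    ultimately show ?case by (intro exI[of _ "P # Ps"]) auto
  qed
  then obtain Ps where Ps: "list_all2 (\<lambda>P G. \<forall>xs. length xs = k \<longrightarrow> ev X P xs (G xs)) Ps Gs" by blast
  from b obtain Q where Q: "\<forall>ys. length ys = length Gs \<longrightarrow> ev X Q ys (F ys)" by (auto simp: rf_def)
  have "ev X (Comp Q Ps) xs (F (map (\<lambda>G. G xs) Gs))" if "length xs = k" for xs
  proof (rule ev_Comp)
    show "list_all2 (\<lambda>g y. ev X g xs y) Ps (map (\<lambda>G. G xs) Gs)"
      using Ps that by (induction rule: list_all2_induct) auto
    show "ev X Q (map (\<lambda>G. G xs) Gs) (F (map (\<lambda>G. G xs) Gs))" using Q by simp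
  qed
  then show ?thesis unfolding rf_def by blast
qed

lemma rf_suc: "rf X k F \<Longrightarrow> rf X k (\<lambda>xs. Suc (F xs))"
proof -
  assume "rf X k F"
  moreover have "rf X 1 (\<lambda>xs. Suc (xs ! 0))"
    unfolding rf_def by (rule exI[of _ Sf]) (auto simp: length_Suc_conv intro: ev_S)
  ultimately show ?thesis using rf_comp[of X k "[F]" "\<lambda>xs. Suc (xs ! 0)"] by simp
qed

lemma rf_const: "rf X k (\<lambda>_. c)"
  by (induction c) (auto intro: rf_zero rf_suc)

lemma rf_c1: "rf X 1 (\<lambda>xs. g (xs ! 0)) \<Longrightarrow> rf X k A \<Longrightarrow> rf X k (\<lambda>xs. g (A xs))"
  using rf_comp[of X k "[A]" "\<lambda>xs. g (xs ! 0)"] by simp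

lemma rf_c2: "rf X 2 (\<lambda>xs. g (xs ! 0) (xs ! 1)) \<Longrightarrow> rf X k A \<Longrightarrow> rf X k B \<Longrightarrow> rf X k (\<lambda>xs. g (A xs) (B xs))"
  using rf_comp[of X k "[A, B]" "\<lambda>xs. g (xs ! 0) (xs ! 1)"] by (simp add: numeral_2_eq_2)

lemma rf_c3: "rf X 3 (\<lambda>xs. g (xs ! 0) (xs ! 1) (xs ! 2)) \<Longrightarrow> rf X k A \<Longrightarrow> rf X k B \<Longrightarrow> rf X k C \<Longrightarrow> rf X k (\<lambda>xs. g (A xs) (B xs) (C xs))"
  using rf_comp[of X k "[A, B, C]" "\<lambda>xs. g (xs ! 0) (xs ! 1) (xs ! 2)"] by (simp add: numeral_3_eq_3)

lemma rf_prec: "rf X k F \<Longrightarrow> rf X (Suc (Suc k)) G \<Longrightarrow>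
   rf X (Suc k) (\<lambda>xs. rec_nat (F (tl xs)) (\<lambda>m r. G (r # m # tl xs)) (hd xs))"
proof -
  assume "rf X k F" "rf X (Suc (Suc k)) G"
  then obtain P Q where P: "\<forall>xs. length xs = k \<longrightarrow> ev X P xs (F xs)"
    and Q: "\<forall>xs. length xs = Suc (Suc k) \<longrightarrow> ev X Q xs (G xs)" by (auto simp: rf_def)
  have "ev X (Prec P Q) (n # xs) (rec_nat (F xs) (\<lambda>m r. G (r # m # xs)) n)" if "length xs = k" for n xs
    using that
  proof (induction n)
    case 0 then show ?case using P by (auto intro: ev_Prec0)
  next
    case (Suc n)
    show ?case by (rule ev_PrecS[OF Suc.IH[OF Suc.prems]]) (use Q Suc.prems in simp)
  qed
  then show ?thesis unfolding rf_def
    by (intro exI[of _ "Prec P Q"]) (auto simp: length_Suc_conv)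
qed

lemma rf_mn: "rf X (Suc k) F \<Longrightarrow> (\<And>xs. length xs = k \<Longrightarrow> \<exists>n. F (n # xs) = 0) \<Longrightarrow>
   rf X k (\<lambda>xs. LEAST n. F (n # xs) = 0)"
proof -
  assume a: "rf X (Suc k) F" and b: "\<And>xs. length xs = k \<Longrightarrow> \<exists>n. F (n # xs) = 0"
  then obtain P where P: "\<forall>xs. length xs = Suc k \<longrightarrow> ev X P xs (F xs)" by (auto simp: rf_def)
  have "ev X (Mn P) xs (LEAST n. F (n # xs) = 0)" if "length xs = k" for xs
  proof (rule ev_Mn)
    from b[OF that] have "F ((LEAST n. F (n # xs) = 0) # xs) = 0" by (rule LeastI_ex)
    moreover have "ev X P ((LEAST n. F (n # xs) = 0) # xs) (F ((LEAST n. F (n # xs) = 0) # xs))" using P that by simp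
    ultimately show "ev X P ((LEAST n. F (n # xs) = 0) # xs) 0" by simp
    show "\<forall>m<(LEAST n. F (n # xs) = 0). \<exists>y. ev X P (m # xs) y \<and> y \<noteq> 0"
    proof (intro allI impI)
      fix m assume "m < (LEAST n. F (n # xs) = 0)"
      then have "F (m # xs) \<noteq> 0" by (rule not_less_Least)
      moreover have "ev X P (m # xs) (F (m # xs))" using P that by simp
      ultimately show "\<exists>y. ev X P (m # xs) y \<and> y \<noteq> 0" by blast
    qed
  qed
  then show ?thesis unfolding rf_def by blast
qed

lemma ce_rf: "rf X 2 F \<Longrightarrow> ce X {w. \<exists>n. F [n, w] = 0}"
proof -
  assume "rf X 2 F"
  then obtain P where P: "\<forall>xs. length xs = 2 \<longrightarrow> ev X P xs (F xs)" by (auto simp: rf_def)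
  have "(\<exists>y. ev X (Mn P) [w] y) \<longleftrightarrow> (\<exists>n. F [n, w] = 0)" for w
  proof
    assume "\<exists>y. ev X (Mn P) [w] y"
    then obtain y where "ev X (Mn P) [w] y" by blast
    then have "ev X P [y, w] 0" by (cases rule: ev.cases) auto
    moreover have "ev X P [y, w] (F [y, w])" using P by simp
    ultimately show "\<exists>n. F [n, w] = 0" using ev_det by metis
  next
    assume "\<exists>n. F [n, w] = 0"
    then have L: "F [LEAST n. F [n, w] = 0, w] = 0" by (rule LeastI_ex)
    have "ev X (Mn P) [w] (LEAST n. F [n, w] = 0)"
    proof (rule ev_Mn)
      have "ev X P [LEAST n. F [n, w] = 0, w] (F [LEAST n. F [n, w] = 0, w])" using P by simp
      then show "ev X P [LEAST n. F [n, w] = 0, w] 0" using L by simp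
      show "\<forall>m<(LEAST n. F [n, w] = 0). \<exists>y. ev X P [m, w] y \<and> y \<noteq> 0"
      proof (intro allI impI)
        fix m assume "m < (LEAST n. F [n, w] = 0)"
        then have "F [m, w] \<noteq> 0" by (rule not_less_Least)
        moreover have "ev X P [m, w] (F [m, w])" using P by simp
        ultimately show "\<exists>y. ev X P [m, w] y \<and> y \<noteq> 0" by blast
      qed
    qed
    then show "\<exists>y. ev X (Mn P) [w] y" by blast
  qed
  then show ?thesis unfolding ce_def by blast
qed




lemma len2: "length xs = 2 \<Longrightarrow> xs = [xs ! 0, xs ! 1]"
  by (cases xs; cases "tl xs") (auto simp: numeral_2_eq_2)
lemma len1: "length xs = 1 \<Longrightarrow> xs = [xs ! 0]"
  by (cases xs) auto

lemma rf_cong2: "rf X k F \<Longrightarrow> k = k' \<Longrightarrow> (\<And>xs. length xs = k' \<Longrightarrow> F xs = G xs) \<Longrightarrow> rf X k' G"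
  using rf_cong by blast

lemma rf_add2: "rf X 2 (\<lambda>xs. xs ! 0 + xs ! 1)"
proof (rule rf_cong2[OF rf_prec[of X 1 "\<lambda>xs. xs ! 0" "\<lambda>xs. Suc (xs ! 0)"]])
  show "rf X 1 (\<lambda>xs. xs ! 0)" by (rule rf_proj) simp
  show "rf X (Suc (Suc 1)) (\<lambda>xs. Suc (xs ! 0))" by (rule rf_suc, rule rf_proj) simp
  show "Suc 1 = 2" by simp
  fix xs :: "nat list" assume "length xs = 2"
  then obtain a b where xs: "xs = [a, b]" using len2 by fastforce
  have "rec_nat b (\<lambda>m r. Suc r) a = a + b" by (induction a) auto
  then show "rec_nat (tl xs ! 0) (\<lambda>m r. Suc ((r # m # tl xs) ! 0)) (hd xs) = xs ! 0 + xs ! 1"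
    unfolding xs by simp
qed

lemma rf_add: "rf X k A \<Longrightarrow> rf X k B \<Longrightarrow> rf X k (\<lambda>xs. A xs + B xs)"
  by (rule rf_c2[OF rf_add2])

lemma rf_mult2: "rf X 2 (\<lambda>xs. xs ! 0 * xs ! 1)"
proof (rule rf_cong2[OF rf_prec[of X 1 "\<lambda>xs. 0" "\<lambda>xs. xs ! 0 + xs ! 2"]])
  show "rf X 1 (\<lambda>xs. 0)" by (rule rf_zero)
  show "rf X (Suc (Suc 1)) (\<lambda>xs. xs ! 0 + xs ! 2)" by (intro rf_add rf_proj) auto
  show "Suc 1 = 2" by simp
  fix xs :: "nat list" assume "length xs = 2"
  then obtain a b where xs: "xs = [a, b]" using len2 by fastforce
  have "rec_nat 0 (\<lambda>m r. r + b) a = a * b" by (induction a) auto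
  then show "rec_nat 0 (\<lambda>m r. (r # m # tl xs) ! 0 + (r # m # tl xs) ! 2) (hd xs) = xs ! 0 * xs ! 1"
    unfolding xs by (simp add: numeral_2_eq_2)
qed

lemma rf_mult: "rf X k A \<Longrightarrow> rf X k B \<Longrightarrow> rf X k (\<lambda>xs. A xs * B xs)"
  by (rule rf_c2[OF rf_mult2])

lemma rf_pred1: "rf X 1 (\<lambda>xs. xs ! 0 - 1)"
proof (rule rf_cong2[OF rf_prec[of X 0 "\<lambda>xs. 0" "\<lambda>xs. xs ! 1"]])
  show "rf X 0 (\<lambda>xs. 0)" by (rule rf_zero)
  show "rf X (Suc (Suc 0)) (\<lambda>xs. xs ! 1)" by (rule rf_proj) simp
  show "Suc 0 = 1" by simp
  fix xs :: "nat list" assume "length xs = 1"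
  then obtain a where xs: "xs = [a]" using len1 by fastforce
  show "rec_nat 0 (\<lambda>m r. (r # m # tl xs) ! 1) (hd xs) = xs ! 0 - 1"
    unfolding xs by (cases a) auto
qed

lemma rf_monus2: "rf X 2 (\<lambda>xs. xs ! 1 - xs ! 0)"
proof (rule rf_cong2[OF rf_prec[of X 1 "\<lambda>xs. xs ! 0" "\<lambda>xs. xs ! 0 - 1"]])
  show "rf X 1 (\<lambda>xs. xs ! 0)" by (rule rf_proj) simp
  show "rf X (Suc (Suc 1)) (\<lambda>xs. xs ! 0 - 1)" by (rule rf_c1[OF rf_pred1], rule rf_proj) simp
  show "Suc 1 = 2" by simp
  fix xs :: "nat list" assume "length xs = 2"
  then obtain a b where xs: "xs = [a, b]" using len2 by fastforce
  show "rec_nat (tl xs ! 0) (\<lambda>m r. (r # m # tl xs) ! 0 - 1) (hd xs) = xs ! 1 - xs ! 0"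
    unfolding xs by (simp, induction a) auto
qed

lemma rf_sub: "rf X k A \<Longrightarrow> rf X k B \<Longrightarrow> rf X k (\<lambda>xs. A xs - B xs)"
  using rf_c2[OF rf_monus2, of X k B A] by simp

lemma rf_ifle: "rf X k A \<Longrightarrow> rf X k B \<Longrightarrow> rf X k T \<Longrightarrow> rf X k E \<Longrightarrow>
  rf X k (\<lambda>xs. if A xs \<le> B xs then T xs else E xs)"
proof -
  assume a: "rf X k A" "rf X k B" "rf X k T" "rf X k E"
  have "rf X k (\<lambda>xs. T xs * (1 - (A xs - B xs)) + E xs * (1 - (1 - (A xs - B xs))))"
    by (intro rf_add rf_mult rf_sub rf_const a)
  then show ?thesis by (rule rf_cong) auto
qed

lemma rf_ifeq: "rf X k A \<Longrightarrow> rf X k B \<Longrightarrow> rf X k T \<Longrightarrow> rf X k E \<Longrightarrow>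
  rf X k (\<lambda>xs. if A xs = B xs then T xs else E xs)"
proof -
  assume a: "rf X k A" "rf X k B" "rf X k T" "rf X k E"
  have "rf X k (\<lambda>xs. if A xs \<le> B xs then (if B xs \<le> A xs then T xs else E xs) else E xs)"
    by (intro rf_ifle a)
  then show ?thesis by (rule rf_cong) auto
qed

lemma rf_odd1: "rf X 1 (\<lambda>xs. if odd (xs ! 0) then 1 else 0)"
proof (rule rf_cong2[OF rf_prec[of X 0 "\<lambda>xs. 0" "\<lambda>xs. 1 - xs ! 0"]])
  show "rf X 0 (\<lambda>xs. 0)" by (rule rf_zero)
  show "rf X (Suc (Suc 0)) (\<lambda>xs. 1 - xs ! 0)" by (intro rf_sub rf_const rf_proj) simp
  show "Suc 0 = 1" by simp
  fix xs :: "nat list" assume "length xs = 1"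
  then obtain a where xs: "xs = [a]" using len1 by fastforce
  show "rec_nat 0 (\<lambda>m r. 1 - (r # m # tl xs) ! 0) (hd xs) = (if odd (xs ! 0) then 1 else 0)"
    unfolding xs by (simp, induction a) auto
qed

lemma rf_ifodd: "rf X k A \<Longrightarrow> rf X k T \<Longrightarrow> rf X k E \<Longrightarrow>
  rf X k (\<lambda>xs. if odd (A xs) then T xs else E xs)"
proof -
  assume a: "rf X k A" "rf X k T" "rf X k E"
  have "rf X k (\<lambda>xs. if (if odd (A xs) then 1 else 0) = (1::nat) then T xs else E xs)"
    by (intro rf_ifeq rf_const a rf_c1[OF rf_odd1, of X k A])
  then show ?thesis by (rule rf_cong) auto
qed

lemma rf_div21: "rf X 1 (\<lambda>xs. xs ! 0 div 2)"
proof (rule rf_cong2[OF rf_prec[of X 0 "\<lambda>xs. 0" "\<lambda>xs. xs ! 0 + (if odd (xs ! 1) then 1 else 0)"]])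
  show "rf X 0 (\<lambda>xs. 0)" by (rule rf_zero)
  show "rf X (Suc (Suc 0)) (\<lambda>xs. xs ! 0 + (if odd (xs ! 1) then 1 else 0))"
    by (intro rf_add rf_ifodd rf_const rf_proj) simp_all
  show "Suc 0 = 1" by simp
  fix xs :: "nat list" assume "length xs = 1"
  then obtain a where xs: "xs = [a]" using len1 by fastforce
  show "rec_nat 0 (\<lambda>m r. (r # m # tl xs) ! 0 + (if odd ((r # m # tl xs) ! 1) then 1 else 0)) (hd xs) = xs ! 0 div 2"
    unfolding xs by (simp, induction a) auto
qed

lemma rf_div2: "rf X k A \<Longrightarrow> rf X k (\<lambda>xs. A xs div 2)"
  by (rule rf_c1[OF rf_div21])

lemma rf_pow21: "rf X 1 (\<lambda>xs. 2 ^ (xs ! 0))"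
proof (rule rf_cong2[OF rf_prec[of X 0 "\<lambda>xs. 1" "\<lambda>xs. xs ! 0 + xs ! 0"]])
  show "rf X 0 (\<lambda>xs. 1)" by (rule rf_const)
  show "rf X (Suc (Suc 0)) (\<lambda>xs. xs ! 0 + xs ! 0)" by (intro rf_add rf_proj) simp_all
  show "Suc 0 = 1" by simp
  fix xs :: "nat list" assume "length xs = 1"
  then obtain a where xs: "xs = [a]" using len1 by fastforce
  show "rec_nat 1 (\<lambda>m r. (r # m # tl xs) ! 0 + (r # m # tl xs) ! 0) (hd xs) = 2 ^ (xs ! 0)"
    unfolding xs by (simp, induction a) auto
qed

lemma rf_pow2: "rf X k A \<Longrightarrow> rf X k (\<lambda>xs. 2 ^ A xs)"
  by (rule rf_c1[OF rf_pow21])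

lemma rf_tri1: "rf X 1 (\<lambda>xs. triangle (xs ! 0))"
proof (rule rf_cong2[OF rf_prec[of X 0 "\<lambda>xs. 0" "\<lambda>xs. xs ! 0 + Suc (xs ! 1)"]])
  show "rf X 0 (\<lambda>xs. 0)" by (rule rf_zero)
  show "rf X (Suc (Suc 0)) (\<lambda>xs. xs ! 0 + Suc (xs ! 1))" by (intro rf_add rf_suc rf_proj) simp_all
  show "Suc 0 = 1" by simp
  fix xs :: "nat list" assume "length xs = 1"
  then obtain a where xs: "xs = [a]" using len1 by fastforce
  show "rec_nat 0 (\<lambda>m r. (r # m # tl xs) ! 0 + Suc ((r # m # tl xs) ! 1)) (hd xs) = triangle (xs ! 0)"
    unfolding xs by (simp, induction a) auto
qed

lemma rf_tri: "rf X k A \<Longrightarrow> rf X k (\<lambda>xs. triangle (A xs))"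
  by (rule rf_c1[OF rf_tri1])

lemma rf_penc: "rf X k A \<Longrightarrow> rf X k B \<Longrightarrow> rf X k (\<lambda>xs. prod_encode (A xs, B xs))"
proof -
  assume a: "rf X k A" "rf X k B"
  have "rf X k (\<lambda>xs. triangle (A xs + B xs) + A xs)" by (intro rf_add rf_tri a)
  then show ?thesis by (rule rf_cong) (simp add: prod_encode_def)
qed

definition tri_inv :: "nat \<Rightarrow> nat" where "tri_inv k = (LEAST t. (if Suc k \<le> triangle (Suc t) then 0 else 1::nat) = 0)"

lemma tri_inv_eq: "tri_inv (prod_encode (a, b)) = a + b"
proof -
  have le: "triangle (Suc t) \<le> triangle s" if "t < s" for t s
    using that by (induction s) (auto simp: less_Suc_eq)
  have "(LEAST t. (if Suc (prod_encode (a, b)) \<le> triangle (Suc t) then 0 else 1::nat) = 0) = a + b"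
  proof (rule Least_equality)
    show "(if Suc (prod_encode (a, b)) \<le> triangle (Suc (a + b)) then 0 else 1::nat) = 0"
      by (simp add: prod_encode_def)
    fix t assume "(if Suc (prod_encode (a, b)) \<le> triangle (Suc t) then 0 else 1::nat) = 0"
    then have "prod_encode (a, b) < triangle (Suc t)" by (auto split: if_splits)
    then show "a + b \<le> t" using le[of t "a+b"] by (force simp: prod_encode_def)
  qed
  then show ?thesis by (simp add: tri_inv_def)
qed

lemma rf_tri_inv: "rf X k A \<Longrightarrow> rf X k (\<lambda>xs. tri_inv (A xs))"
proof -
  assume a: "rf X k A"
  have "rf X 1 (\<lambda>xs. LEAST t. (if Suc (xs ! 0) \<le> triangle (Suc t) then 0 else 1::nat) = 0)"
  proof -
    have "rf X 1 (\<lambda>xs. LEAST t. (\<lambda>ys. if Suc (ys ! 1) \<le> triangle (Suc (ys ! 0)) then 0 else 1::nat) (t # xs) = 0)"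
    proof (rule rf_mn)
      show "rf X (Suc 1) (\<lambda>ys. if Suc (ys ! 1) \<le> triangle (Suc (ys ! 0)) then 0 else 1)"
        by (intro rf_ifle rf_suc rf_tri rf_proj rf_const) simp_all
      fix xs :: "nat list" assume "length xs = 1"
      have "Suc (xs ! 0) \<le> triangle (Suc (xs ! 0))" by (induction "xs ! 0") auto
      then show "\<exists>n. (if Suc ((n # xs) ! 1) \<le> triangle (Suc ((n # xs) ! 0)) then 0 else 1::nat) = 0"
        by (intro exI[of _ "xs ! 0"]) simp
    qed
    then show ?thesis by simp
  qed
  from rf_c1[OF this a] show ?thesis by (simp add: tri_inv_def)
qed

lemma pfst_eq: "fst (prod_decode k) = k - triangle (tri_inv k)"
  and psnd_eq: "snd (prod_decode k) = tri_inv k - (k - triangle (tri_inv k))"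
proof -
  obtain a b where k: "k = prod_encode (a, b)" by (metis prod_decode_inverse surj_pair)
  show "fst (prod_decode k) = k - triangle (tri_inv k)" "snd (prod_decode k) = tri_inv k - (k - triangle (tri_inv k))"
    by (simp_all add: k tri_inv_eq prod_encode_inverse) (simp_all add: prod_encode_def)
qed

lemma rf_pfst: "rf X k A \<Longrightarrow> rf X k (\<lambda>xs. fst (prod_decode (A xs)))"
  unfolding pfst_eq by (intro rf_sub rf_tri rf_tri_inv)

lemma rf_psnd: "rf X k A \<Longrightarrow> rf X k (\<lambda>xs. snd (prod_decode (A xs)))"
  unfolding psnd_eq by (intro rf_sub rf_tri rf_tri_inv)




lemma comp_fun_rf: "comp_fun X f \<longleftrightarrow> rf X 1 (\<lambda>xs. f (xs ! 0))"
  unfolding comp_fun_def rf_def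
proof safe
  fix P assume "\<forall>n. ev X P [n] (f n)"
  then show "\<exists>P. \<forall>xs. length xs = 1 \<longrightarrow> ev X P xs (f (xs ! 0))"
    by (metis len1)
next
  fix P assume h: "\<forall>xs. length xs = 1 \<longrightarrow> ev X P xs (f (xs ! 0))"
  show "\<exists>P. \<forall>n. ev X P [n] (f n)"
  proof (intro exI allI)
    fix n show "ev X P [n] (f n)" using h[rule_format, of "[n]"] by simp
  qed
qed

definition Rep :: "nat \<Rightarrow> nat" where "Rep j = rec_nat 0 (\<lambda>m r. Suc (prod_encode (0, r))) j"

lemma Rep_eq: "Rep j = list_encode (replicate j 0)"
  by (induction j) (simp_all add: Rep_def)

lemma rf_Rep: "rf X k A \<Longrightarrow> rf X k (\<lambda>xs. Rep (A xs))"
proof -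
  assume a: "rf X k A"
  have "rf X (Suc 0) (\<lambda>xs. rec_nat ((\<lambda>ys. 0) (tl xs)) (\<lambda>m r. (\<lambda>ys. Suc (prod_encode (0, ys ! 0))) (r # m # tl xs)) (hd xs))"
    by (rule rf_prec) (intro rf_zero rf_suc rf_penc rf_const rf_proj; simp)+
  then have "rf X 1 (\<lambda>xs. Rep (xs ! 0))"
    by (rule rf_cong2) (auto simp: Rep_def length_Suc_conv)
  from rf_c1[OF this a] show ?thesis .
qed

definition z0 :: "nat \<Rightarrow> bool" where "z0 n = (n = 0)"

definition Cz :: "nat \<Rightarrow> nat" where "Cz k = (if k = 0 then 0 else Suc (prod_encode (1, Rep (k - 1))))"

lemma init_z0: "init z0 (Suc j) = True # replicate j False"
  by (rule nth_equalityI) (auto simp: init_def z0_def nth_Cons' simp del: upt_Suc)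

lemma Cz_eq: "Cz k = str_code (init z0 k)"
  by (cases k) (simp add: init_def Cz_def str_code_def, simp add: Cz_def str_code_def init_z0 Rep_eq)

lemma rf_Cz: "rf X k A \<Longrightarrow> rf X k (\<lambda>xs. Cz (A xs))"
proof -
  assume a: "rf X k A"
  have "rf X k (\<lambda>xs. if A xs = 0 then 0 else Suc (prod_encode (1, Rep (A xs - 1))))"
    by (intro rf_ifeq rf_suc rf_penc rf_Rep rf_sub rf_const a)
  then show ?thesis by (rule rf_cong) (simp add: Cz_def)
qed

definition stepc :: "nat \<Rightarrow> nat" where "stepc c = snd (prod_decode (c - 1))"

lemma prod_decode_0: "prod_decode 0 = (0, 0)"
proof -
  have "prod_encode (0, 0) = 0" by (simp add: prod_encode_def)
  then show ?thesis by (metis prod_encode_inverse)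
qed

lemma stepc_enc: "stepc (list_encode xs) = list_encode (tl xs)"
  by (cases xs) (simp_all add: stepc_def prod_decode_0)

lemma iter_stepc: "(stepc ^^ t) (list_encode xs) = list_encode (drop t xs)"
  by (induction t) (simp_all add: stepc_enc drop_Suc tl_drop)

definition lenc :: "nat \<Rightarrow> nat" where "lenc c = (LEAST t. (stepc ^^ t) c = 0)"

lemma lenc_enc: "lenc (list_encode xs) = length xs"
  unfolding lenc_def
proof (rule Least_equality)
  show "(stepc ^^ length xs) (list_encode xs) = 0" by (simp add: iter_stepc)
  fix t assume "(stepc ^^ t) (list_encode xs) = 0"
  then have "list_encode (drop t xs) = 0" by (simp add: iter_stepc)
  then have "drop t xs = []" by (cases "drop t xs") auto
  then show "length xs \<le> t" by simp
qed

lemma lenc_str: "lenc (str_code \<sigma>) = length \<sigma>"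
  by (simp add: str_code_def lenc_enc)

lemma rf_iter: "rf X 2 (\<lambda>xs. (stepc ^^ (xs ! 0)) (xs ! 1))"
proof -
  have "rf X (Suc 1) (\<lambda>xs. rec_nat ((\<lambda>ys. ys ! 0) (tl xs)) (\<lambda>m r. (\<lambda>ys. snd (prod_decode (ys ! 0 - 1))) (r # m # tl xs)) (hd xs))"
    by (rule rf_prec) (intro rf_psnd rf_sub rf_const rf_proj; simp)+
  then show ?thesis
  proof (rule rf_cong2)
    fix xs :: "nat list" assume "length xs = 2"
    then obtain a b where xs: "xs = [a, b]" using len2 by fastforce
    have "rec_nat b (\<lambda>m r. snd (prod_decode (r - 1))) a = (stepc ^^ a) b"
      by (induction a) (simp_all add: stepc_def)
    then show "rec_nat ((\<lambda>ys. ys ! 0) (tl xs)) (\<lambda>m r. (\<lambda>ys. snd (prod_decode (ys ! 0 - 1))) (r # m # tl xs)) (hd xs) = (stepc ^^ (xs ! 0)) (xs ! 1)"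
      by (simp add: xs)
  qed simp
qed

lemma rf_lenc: "rf X k A \<Longrightarrow> rf X k (\<lambda>xs. lenc (A xs))"
proof -
  assume a: "rf X k A"
  have "rf X 1 (\<lambda>xs. LEAST t. (\<lambda>ys. (stepc ^^ (ys ! 0)) (ys ! 1)) (t # xs) = 0)"
  proof (rule rf_mn)
    show "rf X (Suc 1) (\<lambda>ys. (stepc ^^ (ys ! 0)) (ys ! 1))" using rf_iter[of X] by (simp add: numeral_2_eq_2)
    fix xs :: "nat list" assume "length xs = 1"
    have "(stepc ^^ length (list_decode (xs ! 0))) (xs ! 0) = 0"
      using iter_stepc[of "length (list_decode (xs ! 0))" "list_decode (xs ! 0)"] by simp
    then show "\<exists>n. (\<lambda>ys. (stepc ^^ (ys ! 0)) (ys ! 1)) (n # xs) = 0" by auto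
  qed
  then have "rf X 1 (\<lambda>xs. lenc (xs ! 0))" by (simp add: lenc_def)
  from rf_c1[OF this a] show ?thesis .
qed




lemma finite_len: "finite {\<tau>::bool list. length \<tau> = L}"
  using finite_lists_length_eq[of "UNIV::bool set" L] by simp

lemma card_len: "card {\<tau>::bool list. length \<tau> = L} = 2 ^ L"
  using card_lists_length_eq[of "UNIV::bool set" L] by simp

lemma len_Suc_split: "{\<rho>::bool list. length \<rho> = Suc d} = (\<lambda>\<rho>. False # \<rho>) ` {\<rho>. length \<rho> = d} \<union> (\<lambda>\<rho>. True # \<rho>) ` {\<rho>. length \<rho> = d}"
proof (intro set_eqI iffI)
  fix \<rho> :: "bool list" assume "\<rho> \<in> {\<rho>. length \<rho> = Suc d}"
  then obtain b \<rho>' where r: "\<rho> = b # \<rho>'" "length \<rho>' = d" by (auto simp: length_Suc_conv)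
  then show "\<rho> \<in> (\<lambda>\<rho>. False # \<rho>) ` {\<rho>. length \<rho> = d} \<union> (\<lambda>\<rho>. True # \<rho>) ` {\<rho>. length \<rho> = d}"
    by (cases b) auto
qed auto

lemma is_meas_nil: "is_meas m \<Longrightarrow> m [] = 1"
  and is_meas_nn: "is_meas m \<Longrightarrow> 0 \<le> m \<sigma>"
  and is_meas_split: "is_meas m \<Longrightarrow> m \<sigma> = m (\<sigma> @ [False]) + m (\<sigma> @ [True])"
  unfolding is_meas_def by blast+

lemma sum_ext0: "is_meas m \<Longrightarrow> (\<Sum>\<rho>\<in>{\<rho>. length \<rho> = d}. m (\<sigma> @ \<rho>)) = m \<sigma>"
proof (induction d arbitrary: \<sigma>)
  case 0 then show ?case by simp
next
  case (Suc d)
  have IH: "(\<Sum>\<rho>\<in>{\<rho>. length \<rho> = d}. m (\<sigma> @ b # \<rho>)) = m (\<sigma> @ [b])" for b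
    using Suc.IH[OF Suc.prems, of "\<sigma> @ [b]"] by simp
  have "(\<Sum>\<rho>\<in>{\<rho>. length \<rho> = Suc d}. m (\<sigma> @ \<rho>)) =
     (\<Sum>\<rho>\<in>(\<lambda>\<rho>. False # \<rho>) ` {\<rho>. length \<rho> = d}. m (\<sigma> @ \<rho>)) + (\<Sum>\<rho>\<in>(\<lambda>\<rho>. True # \<rho>) ` {\<rho>. length \<rho> = d}. m (\<sigma> @ \<rho>))"
    unfolding len_Suc_split by (rule sum.union_disjoint) (auto simp: finite_len)
  also have "\<dots> = (\<Sum>\<rho>\<in>{\<rho>. length \<rho> = d}. m (\<sigma> @ False # \<rho>)) + (\<Sum>\<rho>\<in>{\<rho>. length \<rho> = d}. m (\<sigma> @ True # \<rho>))"
    by (simp add: sum.reindex inj_on_def)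
  also have "\<dots> = m \<sigma>" using IH is_meas_split[OF Suc.prems, of \<sigma>] by simp
  finally show ?case .
qed

lemma sum_all: "is_meas m \<Longrightarrow> (\<Sum>\<tau>\<in>{\<tau>. length \<tau> = L}. m \<tau>) = 1"
  using sum_ext0[where m=m and d=L and \<sigma>="[]"] is_meas_nil[of m] by simp

lemma ext_set: "{\<tau>. length \<tau> = L \<and> prefix \<sigma> \<tau>} = (\<lambda>\<rho>. \<sigma> @ \<rho>) ` {\<rho>. length \<rho> = L - length \<sigma>}" if "length \<sigma> \<le> L"
proof (intro set_eqI iffI)
  fix \<tau> assume "\<tau> \<in> {\<tau>. length \<tau> = L \<and> prefix \<sigma> \<tau>}"
  then obtain zs where "\<tau> = \<sigma> @ zs" "length \<tau> = L" by (auto simp: prefix_def)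
  then show "\<tau> \<in> (\<lambda>\<rho>. \<sigma> @ \<rho>) ` {\<rho>. length \<rho> = L - length \<sigma>}" by simp
next
  fix \<tau> assume "\<tau> \<in> (\<lambda>\<rho>. \<sigma> @ \<rho>) ` {\<rho>. length \<rho> = L - length \<sigma>}"
  then obtain zs where "\<tau> = \<sigma> @ zs" "length zs = L - length \<sigma>" by auto
  then show "\<tau> \<in> {\<tau>. length \<tau> = L \<and> prefix \<sigma> \<tau>}" using that by simp
qed

lemma sum_ext: "is_meas m \<Longrightarrow> length \<sigma> \<le> L \<Longrightarrow> (\<Sum>\<tau>\<in>{\<tau>. length \<tau> = L \<and> prefix \<sigma> \<tau>}. m \<tau>) = m \<sigma>"
proof -
  assume a: "is_meas m" "length \<sigma> \<le> L"
  have "(\<Sum>\<tau>\<in>(\<lambda>\<rho>. \<sigma> @ \<rho>) ` {\<rho>. length \<rho> = L - length \<sigma>}. m \<tau>) = (\<Sum>\<rho>\<in>{\<rho>. length \<rho> = L - length \<sigma>}. m (\<sigma> @ \<rho>))"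
    by (rule sum.reindex_cong[where l="\<lambda>\<rho>. \<sigma> @ \<rho>"]) (auto simp: inj_on_def)
  then show ?thesis using ext_set[OF a(2)] sum_ext0[OF a(1)] by simp
qed

lemma sum_ext_le: assumes "is_meas m" shows "(\<Sum>\<tau>\<in>{\<tau>. length \<tau> = L \<and> prefix \<sigma> \<tau>}. m \<tau>) \<le> m \<sigma>"
proof (cases "length \<sigma> \<le> L")
  case False
  then have e: "{\<tau>. length \<tau> = L \<and> prefix \<sigma> \<tau>} = {}" by (auto dest: prefix_length_le)
  show ?thesis unfolding e using is_meas_nn[OF \<open>is_meas m\<close>] by simp
qed (simp add: sum_ext \<open>is_meas m\<close>)

definition Ext :: "bool list set \<Rightarrow> nat \<Rightarrow> bool list set" where
  "Ext S L = {\<tau>. length \<tau> = L \<and> (\<exists>\<sigma>\<in>S. prefix \<sigma> \<tau>)}"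

lemma finite_Ext: "finite (Ext S L)"
  by (rule finite_subset[OF _ finite_len[of L]]) (auto simp: Ext_def)

lemma open_meas_Ext: "open_meas m S = (SUP L. \<Sum>\<tau>\<in>Ext S L. m \<tau>)"
  by (simp add: open_meas_def Ext_def)

lemma sum_Ext_le1: "is_meas m \<Longrightarrow> (\<Sum>\<tau>\<in>Ext S L. m \<tau>) \<le> 1"
proof -
  assume a: "is_meas m"
  have "(\<Sum>\<tau>\<in>Ext S L. m \<tau>) \<le> (\<Sum>\<tau>\<in>{\<tau>. length \<tau> = L}. m \<tau>)"
    by (rule sum_mono2[OF finite_len]) (use is_meas_nn[OF a] in \<open>auto simp: Ext_def\<close>)
  then show ?thesis using sum_all[OF a] by simp
qed

lemma om_upper: "is_meas m \<Longrightarrow> (\<Sum>\<tau>\<in>Ext S L. m \<tau>) \<le> open_meas m S"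
  unfolding open_meas_Ext
  by (rule cSUP_upper) (auto intro!: bdd_aboveI[of _ 1] simp: sum_Ext_le1)

lemma om_le: "(\<And>L. (\<Sum>\<tau>\<in>Ext S L. m \<tau>) \<le> c) \<Longrightarrow> open_meas m S \<le> c"
  unfolding open_meas_Ext by (rule cSUP_least) auto

section \<open>uniform measure\<close>

lemma bern_half: "bern (1/2) \<sigma> = (1/2) ^ length \<sigma>"
proof -
  have "length (filter Not \<sigma>) + length (filter id \<sigma>) = length \<sigma>"
    using sum_length_filter_compl[of id \<sigma>] by (simp add: add.commute)
  then show ?thesis unfolding bern_def by (simp add: power_add[symmetric])
qed

lemma is_meas_u: "is_meas (bern (1/2))"
  unfolding is_meas_def bern_half by simp

lemma atomless_u: "atomless (bern (1/2))"
  unfolding atomless_def bern_half by (simp add: init_def LIMSEQ_realpow_zero)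

definition fu :: "nat \<Rightarrow> nat" where
  "fu k = prod_encode (2, 2 ^ lenc (fst (prod_decode k)) - 1)"

lemma int_decode_2: "int_decode 2 = 1" and int_decode_0: "int_decode 0 = 0"
  by (simp_all add: int_decode_def sum_decode_def)

lemma rat_dec_enc: "rat_dec (prod_encode (a, b)) = of_int (int_decode a) / of_nat (Suc b)"
  by (simp add: rat_dec_def)

lemma comp_meas_u: "comp_meas (bern (1/2))"
  unfolding comp_meas_def
proof (intro exI conjI allI)
  have "rf no_oracle 1 (\<lambda>xs. prod_encode (2, 2 ^ lenc (fst (prod_decode (xs ! 0))) - 1))"
    by (intro rf_penc rf_sub rf_pow2 rf_lenc rf_pfst rf_const rf_proj) simp
  then show "comp_fun no_oracle fu" by (simp add: comp_fun_rf fu_def)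
  fix \<sigma> :: "bool list" and n :: nat
  have "(2::nat) ^ length \<sigma> \<ge> 1" by simp
  then have "real (Suc (2 ^ length \<sigma> - 1)) = 2 ^ length \<sigma>" by (simp add: of_nat_diff)
  then show "\<bar>rat_dec (fu (prod_encode (str_code \<sigma>, n))) - bern (1 / 2) \<sigma>\<bar> \<le> (1 / 2) ^ n"
    by (simp add: fu_def lenc_str rat_dec_enc int_decode_2 bern_half power_one_over)
qed

section \<open>point mass on z0\<close>

definition mz :: "bool list \<Rightarrow> real" where "mz \<sigma> = (if \<sigma> = init z0 (length \<sigma>) then 1 else 0)"

lemma init_Suc: "init z (Suc n) = init z n @ [z n]"
  by (simp add: init_def)

lemma length_init[simp]: "length (init z n) = n"
  by (simp add: init_def)

lemma is_meas_mz: "is_meas mz"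
  unfolding is_meas_def mz_def
proof (intro conjI allI)
  show "(if [] = init z0 (length []) then 1 else 0) = (1::real)" by (simp add: init_def)
  fix \<sigma> :: "bool list"
  show "0 \<le> (if \<sigma> = init z0 (length \<sigma>) then 1 else (0::real))" by simp
  show "(if \<sigma> = init z0 (length \<sigma>) then 1 else 0) =
        (if \<sigma> @ [False] = init z0 (length (\<sigma> @ [False])) then 1 else 0) +
        (if \<sigma> @ [True] = init z0 (length (\<sigma> @ [True])) then 1 else (0::real))"
    by (cases "z0 (length \<sigma>)") (auto simp: init_Suc)
qed

definition fz :: "nat \<Rightarrow> nat" where
  "fz k = prod_encode (if fst (prod_decode k) = Cz (lenc (fst (prod_decode k))) then 2 else 0, 0)"

lemma str_code_inj: "str_code a = str_code b \<longleftrightarrow> a = b"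
proof -
  have "inj (\<lambda>b::bool. if b then 1 else (0::nat))" by (auto simp: inj_on_def split: if_splits)
  then show ?thesis by (simp add: str_code_def list_encode_eq)
qed

lemma comp_meas_mz: "comp_meas mz"
  unfolding comp_meas_def
proof (intro exI conjI allI)
  have "rf no_oracle 1 (\<lambda>xs. prod_encode (if fst (prod_decode (xs ! 0)) = Cz (lenc (fst (prod_decode (xs ! 0)))) then 2 else 0, 0))"
    by (intro rf_penc rf_ifeq rf_Cz rf_lenc rf_pfst rf_const rf_proj) simp_all
  then show "comp_fun no_oracle fz" by (simp add: comp_fun_rf fz_def)
  fix \<sigma> :: "bool list" and n :: nat
  show "\<bar>rat_dec (fz (prod_encode (str_code \<sigma>, n))) - mz \<sigma>\<bar> \<le> (1 / 2) ^ n"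
    by (simp add: fz_def lenc_str rat_dec_enc int_decode_2 int_decode_0 mz_def Cz_eq str_code_inj)
qed

lemma MLR_mz: "MLR mz no_oracle z0"
  unfolding MLR_def
proof
  assume "\<exists>W. ce no_oracle W \<and> (\<forall>n. open_meas mz (test_level W n) \<le> (1 / 2) ^ n) \<and>
           (\<forall>n. \<exists>\<sigma>\<in>test_level W n. \<sigma> = init z0 (length \<sigma>))"
  then obtain W where b: "open_meas mz (test_level W 1) \<le> 1/2" and c: "\<exists>\<sigma>\<in>test_level W 1. \<sigma> = init z0 (length \<sigma>)"
    by (metis power_one_right)
  from c obtain \<sigma> where s: "\<sigma> \<in> test_level W 1" "\<sigma> = init z0 (length \<sigma>)" by blast
  have "\<sigma> \<in> Ext (test_level W 1) (length \<sigma>)" using s by (auto simp: Ext_def)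
  then have "mz \<sigma> \<le> (\<Sum>\<tau>\<in>Ext (test_level W 1) (length \<sigma>). mz \<tau>)"
    by (intro member_le_sum finite_Ext) (use is_meas_nn[OF is_meas_mz] in \<open>auto simp: Ext_def\<close>)
  also have "\<dots> \<le> open_meas mz (test_level W 1)" by (rule om_upper[OF is_meas_mz])
  finally show False using b s by (simp add: mz_def)
qed

lemma binexp_half: "binexp (1/2) = z0"
proof
  fix n
  have "(1/2::real) * 2 ^ Suc n = 2 ^ n" by simp
  then have "nat \<lfloor>(1/2::real) * 2 ^ Suc n\<rfloor> = 2 ^ n"
    by (metis floor_of_nat nat_int of_nat_numeral of_nat_power)
  then show "binexp (1/2) n = z0 n" by (simp add: binexp_def z0_def nat_power_eq)
qed

lemma proper_z0: "proper z0"
  unfolding proper_def using is_meas_mz comp_meas_mz MLR_mz by blast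




definition Qt :: "(nat \<Rightarrow> nat) \<Rightarrow> nat \<Rightarrow> nat \<Rightarrow> nat" where
  "Qt f k w = (if snd (prod_decode w) = Cz k then
     (if odd (fst (prod_decode (f (prod_encode (snd (prod_decode w), fst (prod_decode w) + 2))))) then 0
      else if fst (prod_decode (f (prod_encode (snd (prod_decode w), fst (prod_decode w) + 2)))) div 2 * 2 ^ (fst (prod_decode w) + 1)
             \<le> snd (prod_decode (f (prod_encode (snd (prod_decode w), fst (prod_decode w) + 2)))) + 1 then 0 else 1)
   else 1)"

lemma rf_Qt: assumes hf: "comp_fun X f" shows "rf X 2 (\<lambda>xs. Qt f (xs ! 0) (xs ! 1))"
proof -
  have f1: "rf X 1 (\<lambda>xs. f (xs ! 0))" using hf by (simp add: comp_fun_rf)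
  have rff: "rf X k A \<Longrightarrow> rf X k (\<lambda>xs. f (A xs))" for k A by (rule rf_c1[OF f1])
  show ?thesis unfolding Qt_def
    by (intro rf_ifeq rf_ifodd rf_ifle rf_Cz rf_pfst rf_psnd rff rf_penc rf_add rf_mult rf_pow2 rf_div2 rf_const rf_proj) simp_all
qed

lemma good_iff: "(odd (fst (prod_decode v)) \<or> fst (prod_decode v) div 2 * 2 ^ (n + 1) \<le> snd (prod_decode v) + 1)
   \<longleftrightarrow> rat_dec v \<le> (1/2) ^ (n + 1)"
proof -
  obtain a b where v: "v = prod_encode (a, b)" by (metis prod_decode_inverse surj_pair)
  show ?thesis
  proof (cases "odd a")
    case True
    then have "int_decode a < 0" by (simp add: int_decode_def sum_decode_def)
    then have "rat_dec v < 0" by (simp add: v rat_dec_enc divide_neg_pos)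
    moreover have "(0::real) < (1/2) ^ (n+1)" by simp
    ultimately have le: "rat_dec v \<le> (1/2) ^ (n+1)" by linarith
    have "odd (fst (prod_decode v))" using True by (simp add: v)
    then show ?thesis using le by blast
  next
    case False
    then have d: "int_decode a = int (a div 2)" by (simp add: int_decode_def sum_decode_def)
    have "rat_dec v = real (a div 2) / real (Suc b)" by (simp add: v rat_dec_enc d)
    also have "\<dots> \<le> (1/2) ^ (n+1) \<longleftrightarrow> real (a div 2) * 2 ^ (n+1) \<le> real (Suc b)"
      by (simp add: divide_le_eq power_one_over field_simps)
    also have "\<dots> \<longleftrightarrow> a div 2 * 2 ^ (n+1) \<le> b + 1"
      by (metis of_nat_le_iff of_nat_mult of_nat_numeral of_nat_power plus_1_eq_Suc add.commute)
    finally show ?thesis using False by (simp add: v)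
  qed
qed

lemma prefix_init: "j \<le> k \<Longrightarrow> prefix (init z j) (init z k)"
proof -
  assume "j \<le> k"
  then have "[0..<k] = [0..<j] @ [j..<k]" using upt_add_eq_append[of 0 j "k - j"] by simp
  then show ?thesis by (simp add: init_def prefix_def)
qed

lemma not_cont_proper_z0: "\<not> cont_proper z0"
proof
  assume "cont_proper z0"
  then obtain m where im: "is_meas m" and cm: "comp_meas m" and al: "atomless m" and ml: "MLR m no_oracle z0"
    unfolding cont_proper_def by blast
  from cm obtain f where hf: "comp_fun no_oracle f"
    and ap: "\<And>\<sigma> n. \<bar>rat_dec (f (prod_encode (str_code \<sigma>, n))) - m \<sigma>\<bar> \<le> (1/2) ^ n"
    unfolding comp_meas_def by blast
  define W where "W = {w. \<exists>k. Qt f k w = 0}"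
  have ceW: "ce no_oracle W" unfolding W_def using ce_rf[OF rf_Qt[OF hf]] by simp
  have lev: "\<sigma> \<in> test_level W n \<longleftrightarrow> (\<exists>k. \<sigma> = init z0 k) \<and> rat_dec (f (prod_encode (str_code \<sigma>, n + 2))) \<le> (1/2) ^ (n+1)"
    for \<sigma> n
    unfolding test_level_def W_def Qt_def mem_Collect_eq good_iff[symmetric]
    by (auto simp: Cz_eq str_code_inj split: if_splits)
  have small: "m \<sigma> \<le> (1/2) ^ n" if "\<sigma> \<in> test_level W n" for \<sigma> n
  proof -
    have "m \<sigma> \<le> rat_dec (f (prod_encode (str_code \<sigma>, n + 2))) + (1/2) ^ (n+2)" using ap[of \<sigma> "n+2"] by linarith
    also have "\<dots> \<le> (1/2) ^ (n+1) + (1/2) ^ (n+2)" using lev that by simp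
    also have "\<dots> \<le> (1/2) ^ n" by simp
    finally show ?thesis .
  qed
  have bound: "open_meas m (test_level W n) \<le> (1/2) ^ n" for n
  proof (rule om_le)
    fix L
    show "(\<Sum>\<tau>\<in>Ext (test_level W n) L. m \<tau>) \<le> (1/2) ^ n"
    proof (cases "test_level W n = {}")
      case True show ?thesis unfolding True by (simp add: Ext_def)
    next
      case False
      then obtain \<sigma>1 where "\<sigma>1 \<in> test_level W n" by blast
      then obtain k0 where "init z0 k0 \<in> test_level W n" using lev[of \<sigma>1 n] by auto
      define j where "j = (LEAST j. init z0 j \<in> test_level W n)"
      have jS: "init z0 j \<in> test_level W n" unfolding j_def by (rule LeastI) fact
      have sub: "Ext (test_level W n) L \<subseteq> {\<tau>. length \<tau> = L \<and> prefix (init z0 j) \<tau>}"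
      proof
        fix \<tau> assume "\<tau> \<in> Ext (test_level W n) L"
        then obtain \<sigma> where s: "\<sigma> \<in> test_level W n" "prefix \<sigma> \<tau>" "length \<tau> = L" by (auto simp: Ext_def)
        then obtain k where k: "\<sigma> = init z0 k" using lev[of \<sigma> n] by auto
        then have "j \<le> k" unfolding j_def using s(1) by (simp add: Least_le)
        then have "prefix (init z0 j) \<sigma>" using k prefix_init by blast
        then show "\<tau> \<in> {\<tau>. length \<tau> = L \<and> prefix (init z0 j) \<tau>}" using s by (auto intro: prefix_order.trans)
      qed
      have "(\<Sum>\<tau>\<in>Ext (test_level W n) L. m \<tau>) \<le> (\<Sum>\<tau>\<in>{\<tau>. length \<tau> = L \<and> prefix (init z0 j) \<tau>}. m \<tau>)"
        by (rule sum_mono2[OF finite_subset[OF _ finite_len[of L]] sub]) (auto simp: is_meas_nn[OF im])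
      also have "\<dots> \<le> m (init z0 j)" by (rule sum_ext_le[OF im])
      also have "\<dots> \<le> (1/2) ^ n" by (rule small[OF jS])
      finally show ?thesis .
    qed
  qed
  have cover: "\<exists>\<sigma>\<in>test_level W n. \<sigma> = init z0 (length \<sigma>)" for n
  proof -
    have "(\<lambda>k. m (init z0 k)) \<longlonglongrightarrow> 0" using al by (simp add: atomless_def)
    then have "\<forall>\<^sub>F k in sequentially. m (init z0 k) < (1/2) ^ (n+2)"
      by (rule order_tendstoD(2)) simp
    then obtain k where mk: "m (init z0 k) < (1/2) ^ (n+2)" by (auto simp: eventually_sequentially)
    have "rat_dec (f (prod_encode (str_code (init z0 k), n + 2))) \<le> m (init z0 k) + (1/2) ^ (n+2)"
      using ap[of "init z0 k" "n+2"] by linarith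
    also have "\<dots> \<le> (1/2) ^ (n+1)" using mk by simp
    finally have "init z0 k \<in> test_level W n" using lev[of "init z0 k" n] by auto
    then show ?thesis by (intro bexI[of _ "init z0 k"]) simp_all
  qed
  have "\<exists>W. ce no_oracle W \<and> (\<forall>n. open_meas m (test_level W n) \<le> (1 / 2) ^ n) \<and>
           (\<forall>n. \<exists>\<sigma>\<in>test_level W n. \<sigma> = init z0 (length \<sigma>))"
    using ceW bound cover by blast
  with ml show False unfolding MLR_def by blast
qed




definition Xb :: "bool \<Rightarrow> nat \<Rightarrow> bool" where "Xb b = (if b then z0 else no_oracle)"

definition Wi :: "nat \<Rightarrow> nat set" where
  "Wi i = (case (from_nat i :: recf \<times> bool) of (P, b) \<Rightarrow> {n. \<exists>y. ev (Xb b) P [n] y})"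

definition valid :: "nat \<Rightarrow> bool" where
  "valid i \<longleftrightarrow> (\<forall>n. open_meas (bern (1/2)) (test_level (Wi i) n) \<le> (1/2) ^ n)"

definition Si :: "nat \<Rightarrow> bool list set" where
  "Si i = (if valid i then test_level (Wi i) (i + 2) else {})"

definition U :: "bool list set" where "U = (\<Union>i. Si i)"

lemma sum_Ext_u: "(\<Sum>\<tau>\<in>Ext S L. bern (1/2) \<tau>) = real (card (Ext S L)) * (1/2) ^ L"
proof -
  have "(\<Sum>\<tau>\<in>Ext S L. bern (1/2) \<tau>) = (\<Sum>\<tau>\<in>Ext S L. (1/2) ^ L)"
    by (rule sum.cong) (auto simp: bern_half Ext_def)
  then show ?thesis by simp
qed

lemma card_Si: "real (card (Ext (Si i) L)) * (1/2) ^ L \<le> (1/2) ^ (i + 2)"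
proof (cases "valid i")
  case True
  have "real (card (Ext (Si i) L)) * (1/2) ^ L = (\<Sum>\<tau>\<in>Ext (Si i) L. bern (1/2) \<tau>)" by (simp add: sum_Ext_u)
  also have "\<dots> \<le> open_meas (bern (1/2)) (Si i)" by (rule om_upper[OF is_meas_u])
  also have "\<dots> \<le> (1/2) ^ (i + 2)"
  proof -
    have "Si i = test_level (Wi i) (i + 2)" using True by (simp add: Si_def)
    moreover have "open_meas (bern (1/2)) (test_level (Wi i) (i + 2)) \<le> (1/2) ^ (i + 2)" using True unfolding valid_def by blast
    ultimately show ?thesis by metis
  qed
  finally show ?thesis .
next
  case False
  then have "Ext (Si i) L = {}" by (simp add: Si_def Ext_def)
  then show ?thesis by simp
qed

lemma finite_cover: fixes A :: "nat \<Rightarrow> 'a set" shows "finite F \<Longrightarrow> F \<subseteq> (\<Union>i. A i) \<Longrightarrow> \<exists>N. F \<subseteq> (\<Union>i<N. A i)"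
proof (induction F rule: finite_induct)
  case empty then show ?case by auto
next
  case (insert x F)
  then obtain N where N: "F \<subseteq> (\<Union>i<N. A i)" by auto
  from insert.prems obtain j where j: "x \<in> A j" by auto
  show ?case
    by (rule exI[of _ "max N (Suc j)"]) (use N j in force)
qed

lemma geo: "(\<Sum>i<N. (1/2::real) ^ (i + 2)) = 1/2 - (1/2) ^ (N + 1)"
  by (induction N) (simp_all add: power_Suc)

lemma Ext_U_small: "card (Ext U L) < 2 ^ L"
proof -
  have "Ext U L \<subseteq> (\<Union>i. Ext (Si i) L)" unfolding Ext_def U_def by blast
  from finite_cover[OF finite_Ext this] obtain N where N: "Ext U L \<subseteq> (\<Union>i<N. Ext (Si i) L)" by blast
  have "card (Ext U L) \<le> card (\<Union>i<N. Ext (Si i) L)"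
    by (rule card_mono[OF _ N]) (auto intro: finite_Ext)
  also have "\<dots> \<le> (\<Sum>i<N. card (Ext (Si i) L))" by (rule card_UN_le) simp
  finally have c: "card (Ext U L) \<le> (\<Sum>i<N. card (Ext (Si i) L))" .
  then have "real (card (Ext U L)) \<le> (\<Sum>i<N. real (card (Ext (Si i) L)))"
    by (metis of_nat_le_iff of_nat_sum)
  then have "real (card (Ext U L)) * (1/2) ^ L \<le> (\<Sum>i<N. real (card (Ext (Si i) L))) * (1/2) ^ L"
    by (rule mult_right_mono) simp
  also have "\<dots> = (\<Sum>i<N. real (card (Ext (Si i) L)) * (1/2) ^ L)" by (simp add: sum_distrib_right)
  also have "\<dots> \<le> (\<Sum>i<N. (1/2) ^ (i + 2))" by (rule sum_mono) (rule card_Si)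
  also have "\<dots> < 1"
  proof -
    have "0 \<le> (1/2::real) ^ (N + 1)" by simp
    then show ?thesis unfolding geo by linarith
  qed
  finally have h: "real (card (Ext U L)) * (1/2) ^ L < 1" .
  have e: "real (card (Ext U L)) = (real (card (Ext U L)) * (1/2) ^ L) * 2 ^ L"
    by (simp add: power_one_over)
  have "real (card (Ext U L)) < 1 * 2 ^ L"
    by (subst e, rule mult_strict_right_mono[OF h]) simp
  then have "real (card (Ext U L)) < 2 ^ L" by simp
  then show ?thesis by (metis of_nat_less_iff of_nat_numeral of_nat_power)
qed

definition T :: "bool list \<Rightarrow> bool" where "T \<tau> \<longleftrightarrow> \<not> (\<exists>\<sigma>\<in>U. prefix \<sigma> \<tau>)"

lemma T_down: "T \<tau> \<Longrightarrow> prefix \<alpha> \<tau> \<Longrightarrow> T \<alpha>"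
  unfolding T_def by (auto intro: prefix_order.trans)

definition good :: "bool list \<Rightarrow> bool" where "good \<tau> \<longleftrightarrow> (\<forall>d. \<exists>\<rho>. length \<rho> = d \<and> T (\<tau> @ \<rho>))"

lemma good_nil: "good []"
  unfolding good_def
proof
  fix d
  have "Ext U d \<subset> {\<tau>. length \<tau> = d}"
  proof
    show "Ext U d \<subseteq> {\<tau>. length \<tau> = d}" by (auto simp: Ext_def)
    show "Ext U d \<noteq> {\<tau>. length \<tau> = d}" using Ext_U_small[of d] card_len[of d] by auto
  qed
  then obtain \<tau> where "length \<tau> = d" "\<tau> \<notin> Ext U d" by blast
  then show "\<exists>\<rho>. length \<rho> = d \<and> T ([] @ \<rho>)" by (auto simp: T_def Ext_def)
qed

lemma good_step: "good \<tau> \<Longrightarrow> good (\<tau> @ [False]) \<or> good (\<tau> @ [True])"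
proof (rule ccontr)
  assume g: "good \<tau>" and n: "\<not> (good (\<tau> @ [False]) \<or> good (\<tau> @ [True]))"
  then obtain d0 d1 where d0: "\<forall>\<rho>. length \<rho> = d0 \<longrightarrow> \<not> T (\<tau> @ [False] @ \<rho>)"
    and d1: "\<forall>\<rho>. length \<rho> = d1 \<longrightarrow> \<not> T (\<tau> @ [True] @ \<rho>)" unfolding good_def by auto
  from g obtain \<rho> where r: "length \<rho> = Suc (max d0 d1)" "T (\<tau> @ \<rho>)" unfolding good_def by blast
  then obtain b \<rho>' where r': "\<rho> = b # \<rho>'" "length \<rho>' = max d0 d1" by (auto simp: length_Suc_conv)
  define db where "db = (if b then d1 else d0)"
  have "prefix (\<tau> @ [b] @ take db \<rho>') (\<tau> @ \<rho>)" unfolding r'(1) by (simp add: take_is_prefix)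
  then have "T (\<tau> @ [b] @ take db \<rho>')" using T_down r(2) by blast
  moreover have "length (take db \<rho>') = db" using r'(2) by (simp add: db_def)
  ultimately show False using d0 d1 by (cases b) (auto simp: db_def)
qed

fun sq :: "nat \<Rightarrow> bool list" where
  "sq 0 = []"
| "sq (Suc n) = (if good (sq n @ [False]) then sq n @ [False] else sq n @ [True])"

lemma sq_good: "good (sq n)"
  by (induction n) (use good_nil good_step in auto)

lemma sq_len: "length (sq n) = n"
  by (induction n) auto

definition xr :: "nat \<Rightarrow> bool" where "xr n = sq (Suc n) ! n"

lemma init_xr: "init xr n = sq n"
proof (induction n)
  case 0 then show ?case by (simp add: init_def)
next
  case (Suc n)
  obtain b where b: "sq (Suc n) = sq n @ [b]" by (cases "good (sq n @ [False])") auto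
  then have "xr n = b" by (simp add: xr_def nth_append sq_len)
  then show ?case by (simp only: init_Suc Suc.IH b)
qed

lemma T_sq: "T (sq n)"
  using sq_good[of n] unfolding good_def by (metis append_Nil2 length_0_conv)

lemma MLR_xr: "MLR (bern (1/2)) (Xb b) xr"
  unfolding MLR_def
proof
  assume "\<exists>W. ce (Xb b) W \<and> (\<forall>n. open_meas (bern (1/2)) (test_level W n) \<le> (1/2) ^ n) \<and>
           (\<forall>n. \<exists>\<sigma>\<in>test_level W n. \<sigma> = init xr (length \<sigma>))"
  then obtain W where ce: "ce (Xb b) W" and bd: "\<forall>n. open_meas (bern (1/2)) (test_level W n) \<le> (1/2) ^ n"
    and cv: "\<forall>n. \<exists>\<sigma>\<in>test_level W n. \<sigma> = init xr (length \<sigma>)" by blast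
  from ce obtain P where W: "W = {n. \<exists>y. ev (Xb b) P [n] y}" unfolding ce_def by blast
  define i where "i = to_nat (P, b)"
  have "Wi i = W" by (simp add: Wi_def i_def W)
  then have v: "valid i" and S: "Si i = test_level W (i + 2)" using bd by (simp_all add: valid_def Si_def)
  from cv obtain \<sigma> where s: "\<sigma> \<in> test_level W (i + 2)" "\<sigma> = init xr (length \<sigma>)" by blast
  then have "\<sigma> \<in> U" using S by (auto simp: U_def)
  moreover have "T \<sigma>" using T_sq[of "length \<sigma>"] s(2) by (simp add: init_xr)
  ultimately show False by (auto simp: T_def)
qed



theorem mainTheorem6:
  shows "\<exists>r::real. 0 \<le> r \<and> r \<le> 1 \<and> proper (binexp r) \<and> \<not> cont_proper (binexp r) \<and>
           (\<exists>x. MLR (bern r) (binexp r) x \<and> cont_proper x)"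
proof (intro exI[of _ "1/2"] conjI)
  show "(0::real) \<le> 1/2" "(1/2::real) \<le> 1" by simp_all
  show "proper (binexp (1/2))" unfolding binexp_half by (rule proper_z0)
  show "\<not> cont_proper (binexp (1/2))" unfolding binexp_half by (rule not_cont_proper_z0)
  have m1: "MLR (bern (1/2)) (binexp (1/2)) xr" using MLR_xr[of True] by (simp add: Xb_def binexp_half)
  have m2: "MLR (bern (1/2)) no_oracle xr" using MLR_xr[of False] by (simp add: Xb_def)
  have "cont_proper xr" unfolding cont_proper_def using is_meas_u comp_meas_u atomless_u m2 by blast
  with m1 show "\<exists>x. MLR (bern (1/2)) (binexp (1/2)) x \<and> cont_proper x" by blast
qed

end
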